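(* Fix an integer $d\ge1$ and $n\ge3$. For every $x\neq0$ with $\theta=\theta(x)\in(0,\pi)$, writing $r=\|x\|$ and $\theta_d=g^{\circ d}(\theta)$, $$\Delta L(x)\le\begin{cases}2+(n-2)\dfrac{r-\cos\theta_d}{r}, & \theta\ge\pi/2,\\[2mm] n, & \theta\le\pi/2.\end{cases}$$
   Context: $e_1=(1,0,\dots,0)\in\mathbb{R}^n$; for $x\neq0$, $\theta(x)\in[0,\pi]$ is the angle between $x$ and $e_1$. $g(\theta)=\arccos\big(\frac{(\pi-\theta)\cos\theta+\sin\theta}{\pi}\big)$, $g^{\circ d}$ its $d$-fold composition. $L(x)=\frac12\|x\|^2-\|x\|\cos\big(g^{\circ d}(\theta(x))\big)+\frac12$; $\Delta$ is the Laplacian in $x$. *)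

theory Defs
  imports "HOL-Analysis.Analysis"
begin

definition gfun :: "real \<Rightarrow> real" where
  "gfun \<theta> = arccos (((pi - \<theta>) * cos \<theta> + sin \<theta>) / pi)"

text \<open>Angle between x and the basis vector e = axis k 1 (the role of e_1).\<close>
definition angle_e :: "'n::finite \<Rightarrow> real^'n \<Rightarrow> real" where
  "angle_e k x = arccos ((x \<bullet> axis k 1) / norm x)"

definition Lfun :: "nat \<Rightarrow> 'n::finite \<Rightarrow> real^'n \<Rightarrow> real" where
  "Lfun d k x = (1/2) * (norm x)^2 - norm x * cos ((gfun ^^ d) (angle_e k x)) + 1/2"

definition laplacian :: "(real^'n::finite \<Rightarrow> real) \<Rightarrow> real^'n \<Rightarrow> real" where
  "laplacian f x = (\<Sum>i\<in>UNIV. deriv (deriv (\<lambda>t. f (x + t *\<^sub>R axis i 1))) 0)"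

end

theory Submission
  imports Defs
begin

definition kap :: "real \<Rightarrow> real" where
  "kap c = ((pi - arccos c) * c + sqrt (1 - c\<^sup>2)) / pi"
definition kap1 :: "real \<Rightarrow> real" where
  "kap1 c = (pi - arccos c) / pi"
definition kap2 :: "real \<Rightarrow> real" where
  "kap2 c = 1 / (pi * sqrt (1 - c\<^sup>2))"

lemma kap_deriv:
  assumes "-1 < c" "c < 1"
  shows "(kap has_real_derivative kap1 c) (at c)"
proof -
  have s: "0 < 1 - c\<^sup>2" using assms by (simp add: abs_square_less_1)
  have "((\<lambda>c. ((pi - arccos c) * c + sqrt (1 - c\<^sup>2)) / pi) has_real_derivative
      ((inverse (sqrt (1 - c\<^sup>2)) * c + (pi - arccos c)) + inverse (sqrt (1 - c\<^sup>2)) / 2 * (- (2 * c))) / pi) (at c)"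
    using assms s by (auto intro!: derivative_eq_intros DERIV_arccos[OF assms] DERIV_real_sqrt[OF s] simp: power2_eq_square)
  moreover have "((inverse (sqrt (1 - c\<^sup>2)) * c + (pi - arccos c)) + inverse (sqrt (1 - c\<^sup>2)) / 2 * (- (2 * c))) / pi = kap1 c"
    by (simp add: kap1_def field_simps)
  ultimately show ?thesis unfolding kap_def[abs_def] by simp
qed

lemma kap1_deriv:
  assumes "-1 < c" "c < 1"
  shows "(kap1 has_real_derivative kap2 c) (at c)"
proof -
  have s: "0 < 1 - c\<^sup>2" using assms by (simp add: abs_square_less_1)
  have "((\<lambda>c. (pi - arccos c) / pi) has_real_derivative (- inverse (- sqrt (1 - c\<^sup>2))) / pi) (at c)"
    using assms by (auto intro!: derivative_eq_intros DERIV_arccos[OF assms])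
  moreover have "(- inverse (- sqrt (1 - c\<^sup>2))) / pi = kap2 c"
    using s by (simp add: kap2_def field_simps)
  ultimately show ?thesis unfolding kap1_def[abs_def] by simp
qed

lemma kap1_bounds: "-1 \<le> c \<Longrightarrow> c \<le> 1 \<Longrightarrow> 0 \<le> kap1 c \<and> kap1 c \<le> 1"
  using arccos_lbound[of c] arccos_ubound[of c] by (simp add: kap1_def field_simps)

lemma kap1_pos: "-1 < c \<Longrightarrow> c < 1 \<Longrightarrow> 0 < kap1 c"
  using arccos_lt_bounded[of c] by (simp add: kap1_def field_simps)

lemma kap2_nonneg: "-1 < c \<Longrightarrow> c < 1 \<Longrightarrow> 0 \<le> kap2 c"
  by (simp add: kap2_def abs_square_less_1 less_imp_le)

lemma kap_cont: "continuous_on {-1..1} kap"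
  unfolding kap_def[abs_def]
  by (auto intro!: continuous_intros)

lemma kap_m1: "kap (-1) = 0" by (simp add: kap_def)
lemma kap_1: "kap 1 = 1" by (simp add: kap_def)

lemma kap_mono:
  assumes "-1 \<le> a" "a \<le> b" "b \<le> 1"
  shows "kap a \<le> kap b"
  apply (rule DERIV_nonneg_imp_increasing_open[OF assms(2)])
  subgoal for x using kap_deriv[of x] kap1_bounds[of x] assms by force
  using continuous_on_subset[OF kap_cont] assms by auto

lemma kap_strict:
  assumes "-1 \<le> a" "a < b" "b \<le> 1"
  shows "kap a < kap b"
  apply (rule DERIV_pos_imp_increasing_open[OF assms(2)])
  subgoal for x using kap_deriv[of x] kap1_pos[of x] assms by force
  using continuous_on_subset[OF kap_cont] assms by auto

lemma kap_ge:
  assumes "-1 \<le> c" "c \<le> 1"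
  shows "c \<le> kap c"
proof -
  have "(\<lambda>c. kap c - c) c \<ge> (\<lambda>c. kap c - c) 1"
    apply (rule DERIV_nonpos_imp_decreasing_open[OF assms(2)])
    subgoal for x using kap_deriv[of x] kap1_bounds[of x] assms
      by (force intro!: derivative_eq_intros)
    using continuous_on_subset[OF kap_cont] assms by (auto intro!: continuous_intros)
  thus ?thesis by (simp add: kap_1)
qed

lemma kap_range: "-1 \<le> c \<Longrightarrow> c \<le> 1 \<Longrightarrow> 0 \<le> kap c \<and> kap c \<le> 1"
  using kap_mono[of "-1" c] kap_mono[of c 1] by (simp add: kap_m1 kap_1)

lemma kap_range_open: "-1 < c \<Longrightarrow> c < 1 \<Longrightarrow> 0 \<le> kap c \<and> kap c < 1"
  using kap_range[of c] kap_strict[of c 1] by (simp add: kap_1)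

fun psi1 :: "nat \<Rightarrow> real \<Rightarrow> real" where
  "psi1 0 c = 1"
| "psi1 (Suc d) c = kap1 ((kap^^d) c) * psi1 d c"

fun psi2 :: "nat \<Rightarrow> real \<Rightarrow> real" where
  "psi2 0 c = 0"
| "psi2 (Suc d) c = kap2 ((kap^^d) c) * (psi1 d c)\<^sup>2 + kap1 ((kap^^d) c) * psi2 d c"

lemma iter_props:
  assumes "-1 < c" "c < 1"
  shows "-1 < (kap^^d) c \<and> (kap^^d) c < 1 \<and> c \<le> (kap^^d) c
    \<and> ((kap^^d) has_real_derivative psi1 d c) (at c)
    \<and> (psi1 d has_real_derivative psi2 d c) (at c)
    \<and> 0 \<le> psi1 d c \<and> psi1 d c \<le> 1 \<and> 0 \<le> psi2 d c"
proof (induction d)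
  case 0
  have "(psi1 0 has_real_derivative 0) (at c)"
    by (simp add: psi1.simps(1)[abs_def])
  then show ?case using assms by simp
next
  case (Suc d)
  let ?y = "(kap^^d) c"
  have y: "-1 < ?y" "?y < 1" "c \<le> ?y" using Suc by auto
  have D: "((kap^^d) has_real_derivative psi1 d c) (at c)"
    and D1: "(psi1 d has_real_derivative psi2 d c) (at c)"
    and b: "0 \<le> psi1 d c" "psi1 d c \<le> 1" "0 \<le> psi2 d c" using Suc by auto
  have r: "0 \<le> kap ?y \<and> kap ?y < 1" using kap_range_open[OF y(1,2)] .
  have ge: "?y \<le> kap ?y" using kap_ge[of ?y] y by simp
  have e1: "(kap^^Suc d) = kap \<circ> (kap^^d)" by simp
  have d1: "((kap^^Suc d) has_real_derivative psi1 (Suc d) c) (at c)"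
    unfolding e1 using DERIV_chain[OF kap_deriv[OF y(1,2)] D] by simp
  have e2: "psi1 (Suc d) = (\<lambda>c. (kap1 \<circ> (kap^^d)) c * psi1 d c)" by (auto simp: fun_eq_iff)
  have d2: "(psi1 (Suc d) has_real_derivative psi2 (Suc d) c) (at c)"
    unfolding e2
    using DERIV_mult[OF DERIV_chain[OF kap1_deriv[OF y(1,2)] D] D1]
    by (simp add: power2_eq_square algebra_simps)
  have k1: "0 \<le> kap1 ?y" "kap1 ?y \<le> 1" using kap1_bounds[of ?y] y by auto
  have k2: "0 \<le> kap2 ?y" using kap2_nonneg[OF y(1,2)] .
  have "psi1 (Suc d) c \<le> 1" using k1 b by (simp add: mult_le_one)
  moreover have "0 \<le> psi2 (Suc d) c" using k1 k2 b by simp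
  moreover have "0 \<le> psi1 (Suc d) c" using k1 b by simp
  moreover have ev: "(kap^^Suc d) c = kap ?y" by simp
  ultimately show ?case apply (intro conjI)
    using d1 d2 r ge y by (simp_all only: ev)
qed

lemma iter_nonneg: "1 \<le> d \<Longrightarrow> -1 < c \<Longrightarrow> c < 1 \<Longrightarrow> 0 \<le> (kap^^d) c"
proof -
  assume "1 \<le> d" "-1 < c" "c < 1"
  then obtain m where m: "d = Suc m" by (cases d) auto
  have "-1 < (kap^^m) c" "(kap^^m) c < 1" using iter_props[OF \<open>-1 < c\<close> \<open>c < 1\<close>] by auto
  then show ?thesis using kap_range[of "(kap^^m) c"] m by simp
qed

lemma gfun_iter:
  assumes "-1 \<le> c" "c \<le> 1"
  shows "cos ((gfun^^d) (arccos c)) = (kap^^d) c \<and> 0 \<le> (gfun^^d) (arccos c) \<and> (gfun^^d) (arccos c) \<le> pi"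
proof (induction d)
  case 0
  then show ?case using assms arccos_lbound arccos_ubound by simp
next
  case (Suc d)
  let ?t = "(gfun^^d) (arccos c)"
  have t: "0 \<le> ?t" "?t \<le> pi" and ct: "cos ?t = (kap^^d) c" using Suc by auto
  have sn: "sqrt (1 - (cos ?t)\<^sup>2) = sin ?t"
    using sin_ge_zero[OF t] by (simp add: sin_squared_eq[symmetric])
  have a: "((pi - ?t) * cos ?t + sin ?t) / pi = kap (cos ?t)"
    unfolding kap_def using arccos_cos[OF t] sn by simp
  have kr: "0 \<le> kap (cos ?t) \<and> kap (cos ?t) \<le> 1" using kap_range[of "cos ?t"] by simp
  have g: "(gfun^^Suc d) (arccos c) = arccos (kap (cos ?t))"
    using a by (simp add: gfun_def)
  show ?case unfolding g using kr arccos_lbound arccos_ubound ct by simp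
qed

definition qf :: "real \<Rightarrow> real \<Rightarrow> real \<Rightarrow> real" where "qf r a t = r\<^sup>2 + 2*a*t + t\<^sup>2"
definition Rf :: "real \<Rightarrow> real \<Rightarrow> real \<Rightarrow> real" where "Rf r a t = sqrt (qf r a t)"
definition Cf :: "real \<Rightarrow> real \<Rightarrow> real \<Rightarrow> real \<Rightarrow> real \<Rightarrow> real" where "Cf r a b e t = (b + t*e) / Rf r a t"
definition R1f :: "real \<Rightarrow> real \<Rightarrow> real \<Rightarrow> real" where "R1f r a t = (a + t) / Rf r a t"
definition C1f :: "real \<Rightarrow> real \<Rightarrow> real \<Rightarrow> real \<Rightarrow> real \<Rightarrow> real" where
  "C1f r a b e t = (e - Cf r a b e t * R1f r a t) / Rf r a t"
definition R2f :: "real \<Rightarrow> real \<Rightarrow> real \<Rightarrow> real" where "R2f r a t = (1 - (R1f r a t)\<^sup>2) / Rf r a t"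
definition C2f :: "real \<Rightarrow> real \<Rightarrow> real \<Rightarrow> real \<Rightarrow> real \<Rightarrow> real" where
  "C2f r a b e t = (-2 * C1f r a b e t * R1f r a t - Cf r a b e t * R2f r a t) / Rf r a t"

lemma Rf_pos: "0 < qf r a t \<Longrightarrow> 0 < Rf r a t" by (simp add: Rf_def)

lemma Rf_deriv: assumes "0 < qf r a t" shows "(Rf r a has_real_derivative R1f r a t) (at t)"
proof -
  have "((\<lambda>t. sqrt (r\<^sup>2 + 2*a*t + t\<^sup>2)) has_real_derivative inverse (sqrt (qf r a t)) / 2 * (2*a + 2*t)) (at t)"
    using assms by (auto intro!: derivative_eq_intros DERIV_real_sqrt simp: qf_def)
  moreover have "inverse (sqrt (qf r a t)) / 2 * (2*a + 2*t) = R1f r a t"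
    using assms by (simp add: R1f_def Rf_def field_simps)
  ultimately show ?thesis by (simp add: Rf_def[abs_def] qf_def)
qed

lemma Cf_deriv: assumes "0 < qf r a t" shows "(Cf r a b e has_real_derivative C1f r a b e t) (at t)"
proof -
  have p: "0 < Rf r a t" using Rf_pos[OF assms] .
  have "((\<lambda>t. (b + t*e) / Rf r a t) has_real_derivative (e * Rf r a t - (b + t*e) * R1f r a t) / (Rf r a t * Rf r a t)) (at t)"
    using p by (auto intro!: derivative_eq_intros Rf_deriv[OF assms] DERIV_divide simp: algebra_simps)
  moreover have "(e * Rf r a t - (b + t*e) * R1f r a t) / (Rf r a t * Rf r a t) = C1f r a b e t"
    using p by (simp add: C1f_def Cf_def field_simps)
  ultimately show ?thesis by (simp add: Cf_def[abs_def])
qed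

lemma R1f_deriv: assumes "0 < qf r a t" shows "(R1f r a has_real_derivative R2f r a t) (at t)"
proof -
  have p: "0 < Rf r a t" using Rf_pos[OF assms] .
  have "((\<lambda>t. (a + t) / Rf r a t) has_real_derivative (1 * Rf r a t - (a + t) * R1f r a t) / (Rf r a t * Rf r a t)) (at t)"
    using p by (auto intro!: derivative_eq_intros Rf_deriv[OF assms] DERIV_divide simp: algebra_simps)
  moreover have "(1 * Rf r a t - (a + t) * R1f r a t) / (Rf r a t * Rf r a t) = R2f r a t"
    using p by (simp add: R2f_def R1f_def field_simps power2_eq_square)
  ultimately show ?thesis by (simp add: R1f_def[abs_def])
qed

lemma C1f_deriv: assumes "0 < qf r a t" shows "(C1f r a b e has_real_derivative C2f r a b e t) (at t)"
proof -
  have p: "0 < Rf r a t" using Rf_pos[OF assms] .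
  have "((\<lambda>t. (e - Cf r a b e t * R1f r a t) / Rf r a t) has_real_derivative
      ((0 - (C1f r a b e t * R1f r a t + R2f r a t * Cf r a b e t)) * Rf r a t - (e - Cf r a b e t * R1f r a t) * R1f r a t) / (Rf r a t * Rf r a t)) (at t)"
    using p by (intro DERIV_divide DERIV_diff DERIV_mult DERIV_const Rf_deriv[OF assms] Cf_deriv[OF assms] R1f_deriv[OF assms]) auto
  moreover have "((0 - (C1f r a b e t * R1f r a t + R2f r a t * Cf r a b e t)) * Rf r a t - (e - Cf r a b e t * R1f r a t) * R1f r a t) / (Rf r a t * Rf r a t) = C2f r a b e t"
  proof -
    have ee: "e - Cf r a b e t * R1f r a t = C1f r a b e t * Rf r a t" using p by (simp add: C1f_def)
    show ?thesis unfolding ee using p by (simp add: C2f_def field_simps)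
  qed
  ultimately show ?thesis by (simp add: C1f_def[abs_def])
qed

lemma qf_deriv: "(qf r a has_real_derivative 2*a + 2*t) (at t)"
  unfolding qf_def[abs_def] by (auto intro!: derivative_eq_intros)

lemma second_deriv:
  fixes Pa Pb Pc :: "real \<Rightarrow> real" and r a b e :: real
  assumes r: "0 < r" and b: "-r < b" "b < r"
    and dPa: "\<And>c. -1 < c \<Longrightarrow> c < 1 \<Longrightarrow> (Pa has_real_derivative Pb c) (at c)"
    and dPb: "\<And>c. -1 < c \<Longrightarrow> c < 1 \<Longrightarrow> (Pb has_real_derivative Pc c) (at c)"
  shows "deriv (deriv (\<lambda>t. qf r a t / 2 - Rf r a t * Pa (Cf r a b e t) + 1/2)) 0
    = 1 - (R2f r a 0 * Pa (b/r) + r * Pc (b/r) * (C1f r a b e 0)\<^sup>2 - (b/r) * R2f r a 0 * Pb (b/r))"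
proof -
  define f where "f = (\<lambda>t. qf r a t / 2 - Rf r a t * Pa (Cf r a b e t) + 1/2)"
  define f1 where "f1 = (\<lambda>t. (a + t) - (R1f r a t * Pa (Cf r a b e t) + Rf r a t * (Pb (Cf r a b e t) * C1f r a b e t)))"
  define G where "G = (\<lambda>t. 0 < qf r a t \<and> -1 < Cf r a b e t \<and> Cf r a b e t < 1)"
  have q0: "qf r a 0 = r\<^sup>2" by (simp add: qf_def)
  have R0: "Rf r a 0 = r" using r by (simp add: Rf_def q0)
  have C0: "Cf r a b e 0 = b/r" by (simp add: Cf_def R0)
  have q0p: "0 < qf r a 0" using r q0 by simp
  have C0b: "-1 < b/r" "b/r < 1" using r b by (simp_all add: field_simps)
  have G0: "G 0" using q0p C0 C0b by (simp add: G_def)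
  have cq: "isCont (qf r a) 0" using qf_deriv DERIV_isCont by blast
  have cC: "isCont (Cf r a b e) 0" using Cf_deriv[OF q0p] DERIV_isCont by blast
  have ev1: "eventually (\<lambda>t. 0 < qf r a t) (at 0)"
    using order_tendstoD(1)[OF cq[unfolded isCont_def] q0p] .
  have ev2: "eventually (\<lambda>t. -1 < Cf r a b e t) (at 0)"
    using order_tendstoD(1)[OF cC[unfolded isCont_def]] C0 C0b by simp
  have ev3: "eventually (\<lambda>t. Cf r a b e t < 1) (at 0)"
    using order_tendstoD(2)[OF cC[unfolded isCont_def]] C0 C0b by simp
  have evG: "eventually G (nhds 0)"
    unfolding eventually_nhds_conv_at using G0 eventually_conj[OF ev1 eventually_conj[OF ev2 ev3]]
    by (simp add: G_def)
  have df: "(f has_real_derivative f1 t) (at t)" if "G t" for t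
  proof -
    have q: "0 < qf r a t" and c: "-1 < Cf r a b e t" "Cf r a b e t < 1" using that by (auto simp: G_def)
    have dpc: "((\<lambda>t. Pa (Cf r a b e t)) has_real_derivative Pb (Cf r a b e t) * C1f r a b e t) (at t)"
      using DERIV_chain2[OF dPa[OF c] Cf_deriv[OF q]] .
    have "(f has_real_derivative (2*a + 2*t) / 2 - (R1f r a t * Pa (Cf r a b e t) + Pb (Cf r a b e t) * C1f r a b e t * Rf r a t) + 0) (at t)"
      unfolding f_def
      by (intro DERIV_add DERIV_diff DERIV_mult DERIV_const DERIV_cdivide qf_deriv Rf_deriv[OF q] dpc)
    moreover have "(2*a + 2*t) / 2 - (R1f r a t * Pa (Cf r a b e t) + Pb (Cf r a b e t) * C1f r a b e t * Rf r a t) + 0 = f1 t"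
      by (simp add: f1_def algebra_simps)
    ultimately show ?thesis by simp
  qed
  have e1: "deriv (deriv f) 0 = deriv f1 0"
  proof (rule deriv_cong_ev)
    show "eventually (\<lambda>t. deriv f t = f1 t) (nhds 0)"
      using evG by (rule eventually_mono) (use df DERIV_imp_deriv in blast)
  qed simp
  have C0b': "-1 < Cf r a b e 0" "Cf r a b e 0 < 1" using C0 C0b by simp_all
  have dp1c: "((\<lambda>t. Pb (Cf r a b e t)) has_real_derivative Pc (b/r) * C1f r a b e 0) (at 0)"
    using DERIV_chain2[OF dPb[OF C0b'] Cf_deriv[OF q0p]] C0 by simp
  have dpc0: "((\<lambda>t. Pa (Cf r a b e t)) has_real_derivative Pb (b/r) * C1f r a b e 0) (at 0)"
    using DERIV_chain2[OF dPa[OF C0b'] Cf_deriv[OF q0p]] C0 by simp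
  have "(f1 has_real_derivative 1 - (R2f r a 0 * Pa (b/r) + r * Pc (b/r) * (C1f r a b e 0)\<^sup>2 - (b/r) * R2f r a 0 * Pb (b/r))) (at 0)"
    unfolding f1_def
    apply (rule DERIV_cong[OF DERIV_diff[OF DERIV_add[OF DERIV_const DERIV_ident]
        DERIV_add[OF DERIV_mult[OF R1f_deriv[OF q0p] dpc0] DERIV_mult[OF Rf_deriv[OF q0p] DERIV_mult[OF dp1c C1f_deriv[OF q0p]]]]]])
    using r by (simp add: C0 R0 C2f_def power2_eq_square field_simps)
  then have "deriv f1 0 = 1 - (R2f r a 0 * Pa (b/r) + r * Pc (b/r) * (C1f r a b e 0)\<^sup>2 - (b/r) * R2f r a 0 * Pb (b/r))"
    using DERIV_imp_deriv by metis
  then show ?thesis using e1 by (simp add: f_def)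
qed

definition Psi :: "nat \<Rightarrow> real \<Rightarrow> real" where
  "Psi d c = cos ((gfun^^d) (arccos c))"

lemma Psi_eq: "-1 \<le> c \<Longrightarrow> c \<le> 1 \<Longrightarrow> Psi d c = (kap^^d) c"
  using gfun_iter[of c d] by (simp add: Psi_def)

lemma Psi_deriv: assumes "-1 < c" "c < 1" shows "(Psi d has_real_derivative psi1 d c) (at c)"
proof (rule has_field_derivative_transform_within_open[of "kap^^d" _ _ "{-1<..<1}"])
  show "((kap^^d) has_real_derivative psi1 d c) (at c)" using iter_props[OF assms] by blast
qed (use assms Psi_eq in auto)

lemma psi1_deriv: assumes "-1 < c" "c < 1" shows "(psi1 d has_real_derivative psi2 d c) (at c)"
  using iter_props[OF assms] by blast

lemma line_eq:
  fixes x :: "real^'n" and i k :: 'n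
  shows "Lfun d k (x + t *\<^sub>R axis i 1) =
    qf (norm x) (x$i) t / 2 - Rf (norm x) (x$i) t * Psi d (Cf (norm x) (x$i) (x$k) (if i = k then 1 else 0) t) + 1/2"
proof -
  let ?y = "x + t *\<^sub>R axis i 1"
  have n2: "(norm ?y)\<^sup>2 = qf (norm x) (x$i) t"
  proof -
    have "(norm ?y)\<^sup>2 = ?y \<bullet> ?y" by (rule power2_norm_eq_inner)
    also have "\<dots> = x \<bullet> x + 2 * t * x$i + t\<^sup>2"
      by (simp add: inner_add_left inner_add_right inner_axis inner_axis' inner_axis_axis power2_eq_square algebra_simps)
    finally show ?thesis by (simp add: qf_def power2_norm_eq_inner)
  qed
  have n1: "norm ?y = Rf (norm x) (x$i) t"
    unfolding Rf_def n2[symmetric] by simp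
  have ik: "?y \<bullet> axis k 1 = x$k + t * (if i = k then 1 else 0)"
    unfolding inner_add_left inner_scaleR_left inner_axis by (simp add: axis_def)
  show ?thesis
    unfolding Lfun_def angle_e_def Psi_def Cf_def n1[symmetric] ik[symmetric] n2[symmetric]
    by simp
qed

lemma lap_formula:
  fixes x :: "real^'n" and k :: 'n
  assumes x: "x \<noteq> 0" and b: "\<bar>x$k\<bar> < norm x"
  defines "r \<equiv> norm x" and "c \<equiv> x$k / norm x"
  shows "laplacian (Lfun d k) x = real CARD('n)
    - ((real CARD('n) - 1) * Psi d c + (1 - c\<^sup>2) * psi2 d c - (real CARD('n) - 1) * c * psi1 d c) / r"
proof -
  have r: "0 < r" using x by (simp add: r_def)
  have bb: "- r < x$k" "x$k < r" using b by (auto simp: r_def)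
  define \<delta> where "\<delta> = (\<lambda>i::'n. if i = k then 1 else (0::real))"
  have \<delta>i: "\<delta> i = (if i = k then 1 else 0)" for i by (simp add: \<delta>_def)
  have each: "deriv (deriv (\<lambda>t. Lfun d k (x + t *\<^sub>R axis i 1))) 0
      = 1 - (R2f r (x$i) 0 * Psi d c + r * psi2 d c * (C1f r (x$i) (x$k) (\<delta> i) 0)\<^sup>2 - c * R2f r (x$i) 0 * psi1 d c)" for i
    unfolding line_eq r_def[symmetric] \<delta>i[symmetric]
    using second_deriv[where Pa="Psi d" and Pb="psi1 d" and Pc="psi2 d" and a="x$i" and e="\<delta> i", OF r bb Psi_deriv psi1_deriv]
    by (simp add: c_def r_def)
  have R0: "Rf r a 0 = r" for a using r by (simp add: Rf_def qf_def)
  have R2: "R2f r a 0 = (1 - (a/r)\<^sup>2) / r" for a by (simp add: R2f_def R1f_def R0)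
  have C1: "C1f r a (x$k) e 0 = (e - c * (a/r)) / r" for a e
    unfolding C1f_def Cf_def R1f_def R0 c_def r_def[symmetric] by simp
  have sq: "(\<Sum>i\<in>UNIV. (x$i)\<^sup>2) = r\<^sup>2"
  proof -
    have "r\<^sup>2 = x \<bullet> x" unfolding r_def by (rule power2_norm_eq_inner)
    also have "\<dots> = (\<Sum>i\<in>UNIV. x$i * x$i)" by (simp add: inner_vec_def)
    finally show ?thesis by (simp add: power2_eq_square)
  qed
  have sd2: "(\<Sum>i\<in>UNIV. (\<delta> i)\<^sup>2) = 1"
  proof -
    have "(\<Sum>i\<in>UNIV. (\<delta> i)\<^sup>2) = (\<Sum>i\<in>UNIV. if i = k then 1 else (0::real))"
      by (rule sum.cong) (auto simp: \<delta>_def)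
    then show ?thesis by simp
  qed
  have sdx: "(\<Sum>i\<in>UNIV. \<delta> i * x$i) = x$k"
  proof -
    have "(\<Sum>i\<in>UNIV. \<delta> i * x$i) = (\<Sum>i\<in>UNIV. if i = k then x$k else 0)"
      by (rule sum.cong) (auto simp: \<delta>_def)
    then show ?thesis by simp
  qed
  have SA: "(\<Sum>i\<in>UNIV. R2f r (x$i) 0) = (real CARD('n) - 1) / r"
  proof -
    have "(\<Sum>i\<in>UNIV. R2f r (x$i) 0) = (\<Sum>i\<in>UNIV. 1/r - (x$i)\<^sup>2 / r^3)"
      using r by (intro sum.cong) (simp_all add: R2 field_simps power2_eq_square power3_eq_cube)
    also have "\<dots> = real CARD('n) / r - (\<Sum>i\<in>UNIV. (x$i)\<^sup>2) / r^3"
      by (simp add: sum_subtractf sum_divide_distrib)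
    also have "\<dots> = (real CARD('n) - 1) / r"
      using r unfolding sq by (simp add: field_simps power2_eq_square power3_eq_cube)
    finally show ?thesis .
  qed
  have SB: "(\<Sum>i\<in>UNIV. (C1f r (x$i) (x$k) (\<delta> i) 0)\<^sup>2) = (1 - c\<^sup>2) / r\<^sup>2"
  proof -
    have "(\<Sum>i\<in>UNIV. (C1f r (x$i) (x$k) (\<delta> i) 0)\<^sup>2)
        = (\<Sum>i\<in>UNIV. (\<delta> i)\<^sup>2 / r\<^sup>2 - (2 * c / r^3) * (\<delta> i * x$i) + (c\<^sup>2 / r^4) * (x$i)\<^sup>2)"
      using r by (intro sum.cong) (simp_all add: C1 field_simps power2_eq_square power3_eq_cube power4_eq_xxxx)
    also have "\<dots> = (\<Sum>i\<in>UNIV. (\<delta> i)\<^sup>2) / r\<^sup>2 - (2 * c / r^3) * (\<Sum>i\<in>UNIV. \<delta> i * x$i) + (c\<^sup>2 / r^4) * (\<Sum>i\<in>UNIV. (x$i)\<^sup>2)"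
      by (simp add: sum.distrib sum_subtractf sum_divide_distrib sum_distrib_left)
    also have "\<dots> = (1 - c\<^sup>2) / r\<^sup>2"
      unfolding sd2 sdx sq using r
      by (simp add: c_def r_def[symmetric] field_simps power2_eq_square power3_eq_cube power4_eq_xxxx)
    finally show ?thesis .
  qed
  have "laplacian (Lfun d k) x = (\<Sum>i\<in>UNIV. 1 - (R2f r (x$i) 0 * Psi d c + r * psi2 d c * (C1f r (x$i) (x$k) (\<delta> i) 0)\<^sup>2 - c * R2f r (x$i) 0 * psi1 d c))"
    unfolding laplacian_def using each by simp
  also have "\<dots> = real CARD('n) - ((\<Sum>i\<in>UNIV. R2f r (x$i) 0) * Psi d c + r * psi2 d c * (\<Sum>i\<in>UNIV. (C1f r (x$i) (x$k) (\<delta> i) 0)\<^sup>2) - c * (\<Sum>i\<in>UNIV. R2f r (x$i) 0) * psi1 d c)"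
    by (simp add: sum.distrib sum_subtractf sum_distrib_left sum_distrib_right mult.assoc)
  also have "\<dots> = real CARD('n)
    - ((real CARD('n) - 1) * Psi d c + (1 - c\<^sup>2) * psi2 d c - (real CARD('n) - 1) * c * psi1 d c) / r"
    unfolding SA SB using r by (simp add: field_simps power2_eq_square)
  finally show ?thesis .
qed

theorem mainTheorem7:
  fixes d :: nat and k :: "'n::finite" and x :: "real^'n"
  assumes "d \<ge> 1" and "CARD('n) \<ge> 3" and "x \<noteq> 0"
    and "0 < angle_e k x" and "angle_e k x < pi"
  shows "(angle_e k x \<ge> pi/2 \<longrightarrow>
            laplacian (Lfun d k) x \<le> 2 + (real CARD('n) - 2) *
              (norm x - cos ((gfun ^^ d) (angle_e k x))) / norm x)
       \<and> (angle_e k x \<le> pi/2 \<longrightarrow> laplacian (Lfun d k) x \<le> real CARD('n))"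
proof -
  define r where "r = norm x"
  define c where "c = x$k / norm x"
  define n where "n = real CARD('n)"
  have r: "0 < r" using assms(3) by (simp add: r_def)
  have n3: "3 \<le> n" using assms(2) by (simp add: n_def)
  have ang: "angle_e k x = arccos c"
    by (simp add: angle_e_def c_def inner_axis)
  have cb: "-1 \<le> c" "c \<le> 1"
    using component_le_norm_cart[of x k] r by (auto simp: c_def r_def[symmetric] field_simps abs_le_iff)
  have c1: "c \<noteq> 1" using assms(4) ang by auto
  have c2: "c \<noteq> -1" using assms(5) ang by auto
  have cs: "-1 < c" "c < 1" using cb c1 c2 by auto
  have xb: "\<bar>x$k\<bar> < norm x"
    using cs r by (simp add: c_def r_def[symmetric] field_simps abs_less_iff)
  have lap: "laplacian (Lfun d k) x = n - ((n - 1) * Psi d c + (1 - c\<^sup>2) * psi2 d c - (n - 1) * c * psi1 d c) / r"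
    using lap_formula[OF assms(3) xb, of d] by (simp add: n_def r_def c_def)
  have P: "Psi d c = (kap^^d) c" using Psi_eq cb by blast
  have cosg: "cos ((gfun ^^ d) (angle_e k x)) = Psi d c" by (simp add: ang Psi_def)
  have ip: "c \<le> (kap^^d) c" "0 \<le> psi1 d c" "psi1 d c \<le> 1" "0 \<le> psi2 d c"
    using iter_props[OF cs] by auto
  have P0: "0 \<le> (kap^^d) c" using iter_nonneg[OF assms(1) cs] .
  have oc: "0 \<le> 1 - c\<^sup>2" using cs by (simp add: abs_square_le_1)
  have A: "laplacian (Lfun d k) x \<le> 2 + (n - 2) * (r - Psi d c) / r" if "c \<le> 0"
  proof -
    have t1: "0 \<le> (1 - c\<^sup>2) * psi2 d c" using oc ip by simp
    have t2: "0 \<le> - ((n - 1) * c * psi1 d c)"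
      using that ip n3 by (simp add: mult_nonneg_nonpos mult_nonpos_nonneg)
    have S: "0 \<le> Psi d c + (1 - c\<^sup>2) * psi2 d c - (n - 1) * c * psi1 d c"
      using t1 t2 P P0 by linarith
    have "2 + (n - 2) * (r - Psi d c) / r - laplacian (Lfun d k) x
        = (Psi d c + (1 - c\<^sup>2) * psi2 d c - (n - 1) * c * psi1 d c) / r"
      unfolding lap using r by (simp add: field_simps)
    also have "\<dots> \<ge> 0" using S r by simp
    finally show ?thesis by simp
  qed
  have B: "laplacian (Lfun d k) x \<le> n" if "0 \<le> c"
  proof -
    have t0: "c * psi1 d c \<le> c" using that ip by (simp add: mult_left_le)
    have t1: "0 \<le> (1 - c\<^sup>2) * psi2 d c" using oc ip by simp
    have t2: "0 \<le> (n - 1) * (Psi d c - c * psi1 d c)"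
      using t0 ip P n3 by simp
    have S: "0 \<le> (n - 1) * Psi d c + (1 - c\<^sup>2) * psi2 d c - (n - 1) * c * psi1 d c"
      using t1 t2 by (simp add: algebra_simps)
    show ?thesis unfolding lap using S r by simp
  qed
  have ca: "c \<le> 0" if "pi/2 \<le> angle_e k x"
  proof -
    have "cos (arccos c) \<le> cos (pi/2)"
      using that ang arccos_ubound[OF cb] by (intro cos_monotone_0_pi_le) auto
    then show ?thesis using cb by simp
  qed
  have cb2: "0 \<le> c" if "angle_e k x \<le> pi/2"
  proof -
    have "cos (pi/2) \<le> cos (arccos c)"
      using that ang arccos_lbound[OF cb] by (intro cos_monotone_0_pi_le) auto
    then show ?thesis using cb by simp
  qed
  show ?thesis
    using A ca B cb2 by (simp add: cosg n_def r_def)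
qed

end
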